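(* Let $(X_m)_{m\in\mathbb Z}$ be a homogeneous second order recurrence sequence with constant coefficients. Then for all integers $a,b,c,d,e,m$, $$(X_{d-a}X_{e-b}-X_{e-a}X_{d-b})X_{m-c}=(X_{d-c}X_{e-b}-X_{e-c}X_{d-b})X_{m-a}+(X_{d-a}X_{e-c}-X_{e-a}X_{d-c})X_{m-b}.$$
   Context: A homogeneous second order recurrence sequence with constant coefficients is a sequence $(X_m)_{m\in\mathbb Z}$ of complex numbers for which there are constants $p,q\in\mathbb C$, $q\neq 0$, with $X_m=pX_{m-1}+qX_{m-2}$ for all $m\in\mathbb Z$. *)

theory Defs
  imports Complex_Main
begin

definition hom_second_order_rec :: "(int \<Rightarrow> complex) \<Rightarrow> bool" where
  "hom_second_order_rec X \<longleftrightarrow>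
     (\<exists>p q :: complex. q \<noteq> 0 \<and> (\<forall>m::int. X m = p * X (m - 1) + q * X (m - 2)))"

end

theory Submission
  imports Defs
begin

lemma shift_comb:
  fixes X :: "int \<Rightarrow> complex"
  assumes q: "q \<noteq> 0" and r: "\<And>m. X m = p * X (m - 1) + q * X (m - 2)"
  shows "\<exists>A B. \<forall>k. X (k + n) = A * X k + B * X (k - 1)"
proof (induction n rule: int_induct[where k=0])
  case base
  show ?case by (rule exI[of _ 1], rule exI[of _ 0]) simp
next
  case (step1 i)
  then obtain A B where h: "\<And>k. X (k + i) = A * X k + B * X (k - 1)" by blast
  have "X (k + (i + 1)) = (A * p + B) * X k + (A * q) * X (k - 1)" for k
  proof -
    have "X (k + (i + 1)) = A * X (k + 1) + B * X k" using h[of "k+1"] by (simp add: algebra_simps)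
    also have "X (k + 1) = p * X k + q * X (k - 1)" using r[of "k+1"] by simp
    finally show ?thesis by (simp add: algebra_simps)
  qed
  then show ?case by blast
next
  case (step2 i)
  then obtain A B where h: "\<And>k. X (k + i) = A * X k + B * X (k - 1)" by blast
  have "X (k + (i - 1)) = (B / q) * X k + (A - B * p / q) * X (k - 1)" for k
  proof -
    have "X (k + (i - 1)) = A * X (k - 1) + B * X (k - 2)" using h[of "k-1"] by (simp add: algebra_simps)
    also have "X (k - 2) = (X k - p * X (k - 1)) / q" using r[of k] q by (simp add: field_simps)
    finally show ?thesis using q by (simp add: field_simps)
  qed
  then show ?case by blast
qed

theorem lemma2:
  fixes X :: "int \<Rightarrow> complex" and a b c d e m :: int
  assumes "hom_second_order_rec X"
  shows "(X (d - a) * X (e - b) - X (e - a) * X (d - b)) * X (m - c) =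
         (X (d - c) * X (e - b) - X (e - c) * X (d - b)) * X (m - a) +
         (X (d - a) * X (e - c) - X (e - a) * X (d - c)) * X (m - b)"
proof -
  obtain p q where q: "q \<noteq> 0" and r: "\<And>m. X m = p * X (m - 1) + q * X (m - 2)"
    using assms unfolding hom_second_order_rec_def by blast
  obtain A1 B1 where h1: "\<And>k. X (k + d) = A1 * X k + B1 * X (k - 1)" using shift_comb[OF q r] by blast
  obtain A2 B2 where h2: "\<And>k. X (k + e) = A2 * X k + B2 * X (k - 1)" using shift_comb[OF q r] by blast
  obtain A3 B3 where h3: "\<And>k. X (k + m) = A3 * X k + B3 * X (k - 1)" using shift_comb[OF q r] by blast
  have e1: "X (t - s) = A1 * X (- s) + B1 * X (- s - 1)" if "t = d" for t s
    using h1[of "-s"] that by simp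
  have e2: "X (t - s) = A2 * X (- s) + B2 * X (- s - 1)" if "t = e" for t s
    using h2[of "-s"] that by simp
  have e3: "X (t - s) = A3 * X (- s) + B3 * X (- s - 1)" if "t = m" for t s
    using h3[of "-s"] that by simp
  show ?thesis
    by (simp only: e1[OF refl] e2[OF refl] e3[OF refl]) (simp add: algebra_simps)
qed

end
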